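(* For each $n$, consider the distributed system (under the RJSQ policy) and its synchronized service pool (SSP), as described in the context, both initially empty. Then the process $\Gamma^\star_n(t)=\sum_{k=1}^sW_{n,k}(t)-W^\star_n(t)$, $t\ge0$, has continuous, piecewise linear sample paths, and $\Gamma^\star_n(t)\ge0$ for all $t\ge0$.
   Context: Distributed system $n$: $s\ge2$ stations with single work-conserving FCFS servers, unlimited waiting room, service rates $0<\mu_1\le\cdots\le\mu_s$, $\mu=\sum_k\mu_k$. Customer $j$ appears at time $a_n(j)=\sum_{i\le j}z(i)/\lambda_n$ ($z(i)$ i.i.d. nonnegative with mean 1), has traveling delay vector $\sqrt n\boldsymbol\gamma(j)$ ($\boldsymbol\gamma(j)$ i.i.d. random vectors in $\mathbb R_+^s$ taking finitely many values $\boldsymbol d_1,\ldots,\boldsymbol d_b$), and is routed by the randomized join-the-shortest-queue (RJSQ) policy to a destination $\xi_n(j)\in\{1,\ldots,s\}$ (each customer is sent to station $k$ with probability depending on the ranking of the weighted queue lengths $Q_{n,\ell}/\mu_\ell$ at its appearance), arriving at station $\xi_n(j)$ at time $a_n(j)+\sqrt n\gamma_{\xi_n(j)}(j)$. The $i$th customer served at station $k$ has service requirement $w_k(i)$ (i.i.d. nonnegative, mean 1) and service time $w_k(i)/\mu_k$. $W_{n,k}(t)$ is the stationed workload at station $k$: the total unfinished service requirement (remaining service time multiplied by $\mu_k$) of customers present at station $k$ at time $t$. SSP $n$: a single station with one work-conserving FCFS server of rate $\mu$ and unlimited waiting room. For each customer $j$ of distributed system $n$ there is a counterpart that is of class $k$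 if $\xi_n(j)=k$, arrives at the SSP station at the same time $a_n(j)+\sqrt n\gamma_{\xi_n(j)}(j)$, and has the same service requirement (the $i$th class-$k$ customer requires $w_k(i)$, with service time $w_k(i)/\mu$). $W^\star_n(t)$ is the total unfinished service requirement of customers present at the SSP station at time $t$. *)

theory Defs
  imports "HOL-Analysis.Analysis"
begin

text \<open>Workload (in units of service requirement) at time t of a single-station,
single-server, work-conserving queue with server rate c, initially empty, fed by the
customers j \<ge> 1 with sel j, customer j arriving at time arr j with service
requirement v j.  This is the standard explicit (Reich / one-sided reflection) formula
  W(t) = sup over u in [0,t] of ( work arriving in [u,t] - c (t - u) ),
which describes the total unfinished service requirement present at time t
(right-continuous, customers arriving exactly at t included).\<close>

definition queue_workload ::
  "(nat \<Rightarrow> real) \<Rightarrow> (nat \<Rightarrow> real) \<Rightarrow> (nat \<Rightarrow> bool) \<Rightarrow> real \<Rightarrow> real \<Rightarrow> real" where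
  "queue_workload arr v sel c t =
     (SUP u\<in>{0..t}. (\<Sum>j\<in>{j. 1 \<le> j \<and> sel j \<and> u \<le> arr j \<and> arr j \<le> t}. v j) - c * (t - u))"

text \<open>Piecewise linear on [0,\<infinity>): on every [0,T] there is a finite partition
such that f is affine on each cell.\<close>

definition piecewise_linear_nonneg :: "(real \<Rightarrow> real) \<Rightarrow> bool" where
  "piecewise_linear_nonneg f \<longleftrightarrow>
     (\<forall>T>0. \<exists>P. finite P \<and> 0 \<in> P \<and> T \<in> P \<and> P \<subseteq> {0..T} \<and>
        (\<forall>a\<in>P. \<forall>b\<in>P. a < b \<and> {a<..<b} \<inter> P = {} \<longrightarrow>
            (\<exists>\<alpha> \<beta>. \<forall>x\<in>{a..b}. f x = \<alpha> * x + \<beta>)))"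

end

theory Submission imports Defs begin
definition Aw :: "(nat \<Rightarrow> real) \<Rightarrow> (nat \<Rightarrow> real) \<Rightarrow> (nat \<Rightarrow> bool) \<Rightarrow> real \<Rightarrow> real \<Rightarrow> real" where
  "Aw arr v sel u t = (\<Sum>j\<in>{j. 1 \<le> j \<and> sel j \<and> u \<le> arr j \<and> arr j \<le> t}. v j)"

definition Jt :: "(nat \<Rightarrow> real) \<Rightarrow> (nat \<Rightarrow> real) \<Rightarrow> (nat \<Rightarrow> bool) \<Rightarrow> real \<Rightarrow> real" where
  "Jt arr v sel t = (\<Sum>j\<in>{j. 1 \<le> j \<and> sel j \<and> arr j = t}. v j)"

lemma qw_def: "queue_workload arr v sel c t = (SUP u\<in>{0..t}. Aw arr v sel u t - c * (t - u))"
  unfolding queue_workload_def Aw_def by simp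

locale Q =
  fixes arr v :: "nat \<Rightarrow> real"
  assumes fin: "\<And>t. finite {j. 1 \<le> j \<and> arr j \<le> t}"
    and vpos: "\<And>j. 1 \<le> j \<Longrightarrow> 0 \<le> v j"
begin

lemma fin2: "finite {j. 1 \<le> j \<and> sel j \<and> u \<le> arr j \<and> arr j \<le> t}"
  by (rule finite_subset[OF _ fin[of t]]) auto

lemma fin3: "finite {j. 1 \<le> j \<and> sel j \<and> arr j = t}"
  by (rule finite_subset[OF _ fin[of t]]) auto

lemma A_nonneg: "0 \<le> Aw arr v sel u t"
  unfolding Aw_def by (rule sum_nonneg) (auto intro: vpos)

lemma A_le: "Aw arr v sel u t \<le> (\<Sum>j\<in>{j. 1 \<le> j \<and> arr j \<le> t}. v j)"
  unfolding Aw_def by (rule sum_mono2[OF fin]) (auto intro: vpos)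

lemma bdd: "bdd_above ((\<lambda>u. Aw arr v sel u t - c * (t - u)) ` {0..t})"
proof (rule bdd_aboveI2)
  fix u assume u: "u \<in> {0..t}"
  have "- c * (t - u) \<le> \<bar>c\<bar> * (t - u)" using u
    by (metis abs_ge_minus_self abs_ge_zero atLeastAtMost_iff diff_ge_0_iff_ge mult_minus_left mult_right_mono)
  also have "\<dots> \<le> \<bar>c\<bar> * t" using u by (intro mult_left_mono) auto
  finally show "Aw arr v sel u t - c * (t - u) \<le> (\<Sum>j\<in>{j. 1 \<le> j \<and> arr j \<le> t}. v j) + \<bar>c\<bar> * t"
    using A_le[of sel u t] by linarith
qed

lemma W_upper: "0 \<le> u \<Longrightarrow> u \<le> t \<Longrightarrow> Aw arr v sel u t - c * (t - u) \<le> queue_workload arr v sel c t"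
  unfolding qw_def by (rule cSUP_upper[OF _ bdd]) auto

lemma W_least: "0 \<le> t \<Longrightarrow> (\<And>u. 0 \<le> u \<Longrightarrow> u \<le> t \<Longrightarrow> Aw arr v sel u t - c * (t - u) \<le> M)
   \<Longrightarrow> queue_workload arr v sel c t \<le> M"
  unfolding qw_def by (rule cSUP_least) auto

lemma W_nonneg: "0 \<le> t \<Longrightarrow> 0 \<le> queue_workload arr v sel c t"
  using W_upper[of t t sel c] A_nonneg[of sel t t] by simp

lemma key:
  assumes c: "0 \<le> c" and a: "0 \<le> a" "a < t"
    and no: "\<And>j. 1 \<le> j \<Longrightarrow> sel j \<Longrightarrow> a < arr j \<Longrightarrow> arr j < t \<Longrightarrow> False"
  shows "queue_workload arr v sel c t = max (queue_workload arr v sel c a - c * (t - a)) 0 + Jt arr v sel t"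
proof -
  have s1: "Aw arr v sel u t = Aw arr v sel u a + Jt arr v sel t" if "u \<le> a" for u
  proof -
    have "{j. 1 \<le> j \<and> sel j \<and> u \<le> arr j \<and> arr j \<le> t} =
      {j. 1 \<le> j \<and> sel j \<and> u \<le> arr j \<and> arr j \<le> a} \<union> {j. 1 \<le> j \<and> sel j \<and> arr j = t}"
      using that a no by (auto simp: not_less) (meson linorder_not_le order_le_less)+
    moreover have d: "{j. 1 \<le> j \<and> sel j \<and> u \<le> arr j \<and> arr j \<le> a} \<inter> {j. 1 \<le> j \<and> sel j \<and> arr j = t} = {}"
      using a by auto
    ultimately show ?thesis unfolding Aw_def Jt_def
      by (simp only: sum.union_disjoint[OF fin2 fin3 d])
  qed
  have s2: "Aw arr v sel u t = Jt arr v sel t" if "a < u" "u \<le> t" for u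
  proof -
    have "{j. 1 \<le> j \<and> sel j \<and> u \<le> arr j \<and> arr j \<le> t} = {j. 1 \<le> j \<and> sel j \<and> arr j = t}"
      using that a no by (auto simp: not_less) (meson less_le_trans order_le_less)
    then show ?thesis unfolding Aw_def Jt_def by simp
  qed
  let ?W = "queue_workload arr v sel c"
  show ?thesis
  proof (rule antisym)
    show "?W t \<le> max (?W a - c * (t - a)) 0 + Jt arr v sel t"
    proof (rule W_least)
      fix u assume u: "0 \<le> u" "u \<le> t"
      show "Aw arr v sel u t - c * (t - u) \<le> max (?W a - c * (t - a)) 0 + Jt arr v sel t"
      proof (cases "u \<le> a")
        case True
        with W_upper[of u a sel c] u show ?thesis by (simp add: s1 algebra_simps)
      next
        case False
        then have "0 \<le> c * (t - u)" using c u by simp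
        with s2[of u] False u show ?thesis by simp
      qed
    qed (use a in simp)
    have g1: "Jt arr v sel t \<le> ?W t" using W_upper[of t t sel c] s2[of t] a by simp
    have "?W a \<le> ?W t - Jt arr v sel t + c * (t - a)"
    proof (rule W_least)
      fix u assume u: "0 \<le> u" "u \<le> a"
      show "Aw arr v sel u a - c * (a - u) \<le> ?W t - Jt arr v sel t + c * (t - a)"
        using W_upper[of u t sel c] u a s1[of u] by (simp add: algebra_simps)
    qed (use a in simp)
    then show "max (?W a - c * (t - a)) 0 + Jt arr v sel t \<le> ?W t" using g1 by simp
  qed
qed

end

lemma affine_max:
  fixes c w a p q :: real
  assumes c: "0 < c" and nb: "\<not> (p < a + w / c \<and> a + w / c < q)"
  shows "\<exists>\<alpha> \<beta>. \<forall>x\<in>{p..q}. max (w - c * (x - a)) 0 = \<alpha> * x + \<beta>"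
proof (cases "q \<le> a + w / c")
  case True
  have "max (w - c * (x - a)) 0 = (- c) * x + (w + c * a)" if "x \<in> {p..q}" for x
  proof -
    have "x - a \<le> w / c" using that True by simp
    then have "c * (x - a) \<le> w" using c by (simp add: pos_le_divide_eq mult.commute)
    then show ?thesis by (simp add: algebra_simps)
  qed
  then show ?thesis by blast
next
  case False
  then have le: "a + w / c \<le> p" using nb by auto
  have "max (w - c * (x - a)) 0 = 0 * x + 0" if "x \<in> {p..q}" for x
  proof -
    have "w / c \<le> x - a" using that le by simp
    then have "w \<le> c * (x - a)" using c by (simp add: pos_divide_le_eq mult.commute)
    then show ?thesis by simp
  qed
  then show ?thesis by blast
qed

lemma affine_sum:
  fixes f :: "nat \<Rightarrow> real \<Rightarrow> real"
  assumes "finite K" "\<forall>k\<in>K. \<exists>\<alpha> \<beta>. \<forall>x\<in>I. f k x = \<alpha> * x + \<beta>"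
  shows "\<exists>\<alpha> \<beta>. \<forall>x\<in>I. (\<Sum>k\<in>K. f k x) = \<alpha> * x + \<beta>"
  using assms
proof (induction K rule: finite_induct)
  case empty
  then show ?case by (intro exI[of _ 0]) simp
next
  case (insert k K)
  then obtain \<alpha>1 \<beta>1 where 1: "\<forall>x\<in>I. (\<Sum>k\<in>K. f k x) = \<alpha>1 * x + \<beta>1" by auto
  from insert obtain \<alpha>2 \<beta>2 where 2: "\<forall>x\<in>I. f k x = \<alpha>2 * x + \<beta>2" by auto
  have "\<forall>x\<in>I. (\<Sum>k\<in>insert k K. f k x) = (\<alpha>1 + \<alpha>2) * x + (\<beta>1 + \<beta>2)"
    using 1 2 insert by (simp add: algebra_simps)
  then show ?case by blast
qed

lemma part_sum:
  fixes v :: "nat \<Rightarrow> real" and xi :: "nat \<Rightarrow> nat"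
  assumes "finite S" "\<forall>j\<in>S. xi j \<in> {1..s}"
  shows "(\<Sum>k=1..s. \<Sum>j\<in>{j\<in>S. xi j = k}. v j) = sum v S"
  using sum.group[of S "{1..s}" xi v] assms by (simp add: image_subset_iff)


lemma main:
  fixes s :: nat and mu :: "nat \<Rightarrow> real" and xi :: "nat \<Rightarrow> nat" and v arr :: "nat \<Rightarrow> real"
    and G :: "real \<Rightarrow> real"
  assumes s1: "s \<ge> 1"
    and mupos: "\<forall>k\<in>{1..s}. 0 < mu k"
    and fin: "\<And>t. finite {j. 1 \<le> j \<and> arr j \<le> t}"
    and arrpos: "\<And>j. 1 \<le> j \<Longrightarrow> 0 \<le> arr j"
    and xis: "\<forall>j\<ge>1. xi j \<in> {1..s}"
    and vpos: "\<forall>j\<ge>1. 0 \<le> v j"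
  defines "G \<equiv> (\<lambda>t. (\<Sum>k=1..s. queue_workload arr v (\<lambda>j. xi j = k) (mu k) t)
                      - queue_workload arr v (\<lambda>j. True) (\<Sum>k=1..s. mu k) t)"
  shows "continuous_on {0..} G \<and> piecewise_linear_nonneg G \<and> (\<forall>t\<ge>0. 0 \<le> G t)"
proof -
  interpret Q arr v using fin vpos by unfold_locales auto
  define M where "M = (\<Sum>k=1..s. mu k)"
  have Mpos: "0 < M" unfolding M_def using s1 mupos by (intro sum_pos) auto
  define Wk where "Wk k = queue_workload arr v (\<lambda>j. xi j = k) (mu k)" for k
  define Ws where "Ws = queue_workload arr v (\<lambda>j. True) M"
  have G_eq: "G t = (\<Sum>k=1..s. Wk k t) - Ws t" for t unfolding G_def Wk_def Ws_def M_def by simp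
  define F where "F a t = (\<Sum>k=1..s. max (Wk k a - mu k * (t - a)) 0) - max (Ws a - M * (t - a)) 0" for a t
  have Gf: "G t = F a t" if a: "0 \<le> a" "a \<le> t" and no: "\<And>j. 1 \<le> j \<Longrightarrow> a < arr j \<Longrightarrow> arr j < t \<Longrightarrow> False"
    for a t
  proof (cases "a = t")
    case True
    have "max (Wk k a) 0 = Wk k a" for k unfolding Wk_def using W_nonneg a by simp
    moreover have "max (Ws a) 0 = Ws a" unfolding Ws_def using W_nonneg a by simp
    ultimately show ?thesis using True by (simp add: G_eq F_def)
  next
    case False
    then have at: "a < t" using a by simp
    have k: "Wk k t = max (Wk k a - mu k * (t - a)) 0 + Jt arr v (\<lambda>j. xi j = k) t" if "k \<in> {1..s}" for k
    proof -
      have "0 \<le> mu k" using mupos that by (auto intro: less_imp_le)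
      then show ?thesis unfolding Wk_def by (intro key) (use a at no in auto)
    qed
    have s: "Ws t = max (Ws a - M * (t - a)) 0 + Jt arr v (\<lambda>j. True) t"
      unfolding Ws_def using Mpos by (intro key) (use a at no in auto)
    have J: "(\<Sum>k=1..s. Jt arr v (\<lambda>j. xi j = k) t) = Jt arr v (\<lambda>j. True) t"
    proof -
      have "(\<Sum>k=1..s. Jt arr v (\<lambda>j. xi j = k) t) =
        (\<Sum>k=1..s. \<Sum>j\<in>{j\<in>{j. 1 \<le> j \<and> True \<and> arr j = t}. xi j = k}. v j)"
        unfolding Jt_def by (intro sum.cong refl) auto
      also have "\<dots> = Jt arr v (\<lambda>j. True) t" unfolding Jt_def
        by (rule part_sum) (use fin3[of "\<lambda>j. True"] xis in auto)
      finally show ?thesis .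
    qed
    show ?thesis using k s J by (simp add: G_eq F_def sum.distrib)
  qed
  have Fcont: "continuous_on S (F a)" for a S
    unfolding F_def by (intro continuous_intros)
  have nonneg: "0 \<le> G t" if t: "0 \<le> t" for t
  proof -
    have "Ws t \<le> (\<Sum>k=1..s. Wk k t)" unfolding Ws_def
    proof (rule W_least[OF t])
      fix u assume u: "0 \<le> u" "u \<le> t"
      have "Aw arr v (\<lambda>j. True) u t = (\<Sum>k=1..s. Aw arr v (\<lambda>j. xi j = k) u t)"
      proof -
        have "(\<Sum>k=1..s. Aw arr v (\<lambda>j. xi j = k) u t) =
          (\<Sum>k=1..s. \<Sum>j\<in>{j\<in>{j. 1 \<le> j \<and> True \<and> u \<le> arr j \<and> arr j \<le> t}. xi j = k}. v j)"
          unfolding Aw_def by (intro sum.cong refl) auto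
        also have "\<dots> = Aw arr v (\<lambda>j. True) u t" unfolding Aw_def
          by (rule part_sum) (use fin2[of "\<lambda>j. True"] xis in auto)
        finally show ?thesis by simp
      qed
      then have "Aw arr v (\<lambda>j. True) u t - M * (t - u) =
          (\<Sum>k=1..s. Aw arr v (\<lambda>j. xi j = k) u t - mu k * (t - u))"
        unfolding M_def by (simp add: sum_subtractf sum_distrib_right)
      also have "\<dots> \<le> (\<Sum>k=1..s. Wk k t)"
        unfolding Wk_def by (intro sum_mono W_upper u)
      finally show "Aw arr v (\<lambda>j. True) u t - M * (t - u) \<le> (\<Sum>k=1..s. Wk k t)" .
    qed
    then show ?thesis by (simp add: G_eq)
  qed
  have cont: "continuous_on {0..} G"
    unfolding continuous_on_def
  proof
    fix t :: real assume "t \<in> {0..}"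
    then have t: "0 \<le> t" by simp
    define S where "S = arr ` {j. 1 \<le> j \<and> arr j \<le> t + 1}"
    have finS: "finite S" unfolding S_def using fin by simp
    define b where "b = Min (insert (t + 1) {x\<in>S. t < x})"
    define a where "a = Max (insert 0 {x\<in>S. x < t})"
    have finB: "finite (insert (t + 1) {x\<in>S. t < x})" using finS by simp
    have finA: "finite (insert 0 {x\<in>S. x < t})" using finS by simp
    have tb: "t < b" unfolding b_def using finB by (subst Min_gr_iff) auto
    have b1: "b \<le> t + 1" unfolding b_def using finB by (intro Min_le) auto
    have a0: "0 \<le> a" unfolding a_def using finA by (intro Max_ge) auto
    have at: "a \<le> t" unfolding a_def using finA t by (subst Max_le_iff) auto
    have at2: "a < t \<or> a = 0" 
    proof (cases "t = 0")
      case True then show ?thesis using a0 at by simp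
    next
      case False then have "0 < t" using t by simp
      then have "a < t" unfolding a_def using finA by (subst Max_less_iff) auto
      then show ?thesis by simp
    qed
    have nob: False if "1 \<le> j" "t < arr j" "arr j < b" for j
    proof -
      have "arr j \<in> {x\<in>S. t < x}" unfolding S_def using that b1 by auto
      then have "b \<le> arr j" unfolding b_def using finB by (intro Min_le) auto
      then show False using that by simp
    qed
    have noa: False if "1 \<le> j" "a < arr j" "arr j < t" for j
    proof -
      have "arr j \<in> {x\<in>S. x < t}" unfolding S_def using that by auto
      then have "arr j \<le> a" unfolding a_def using finA by (intro Max_ge) auto
      then show False using that by simp
    qed
    have c1: "continuous_on {t..b} G"
    proof (rule continuous_on_eq[OF Fcont[of "{t..b}" t]])
      fix x assume "x \<in> {t..b}"
      then show "F t x = G x" using nob t by (intro Gf[symmetric]) force+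
    qed
    have c2: "continuous_on {a..t} G"
    proof (rule continuous_on_eq[OF Fcont[of "{a..t}" a]])
      fix x assume "x \<in> {a..t}"
      then show "F a x = G x" using noa a0 by (intro Gf[symmetric]) force+
    qed
    have "continuous_on ({a..t} \<union> {t..b}) G" by (rule continuous_on_closed_Un[OF _ _ c2 c1]) auto
    moreover have "{a..t} \<union> {t..b} = {a..b}" using at tb by auto
    ultimately have "continuous_on {a..b} G" by simp
    then have lim: "(G \<longlongrightarrow> G t) (at t within {a..b})"
      unfolding continuous_on_def using at tb by auto
    have ev: "eventually (\<lambda>x. x \<in> {a..b} \<longleftrightarrow> x \<in> {0..}) (at t)"
    proof (cases "a < t")
      case True
      show ?thesis unfolding eventually_at
        by (rule exI[of _ "min (b - t) (t - a)"]) (use True tb a0 in \<open>auto simp: dist_real_def\<close>)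
    next
      case False
      then have "a = 0" using at2 by simp
      then show ?thesis unfolding eventually_at
        by (intro exI[of _ "b - t"]) (use tb in \<open>auto simp: dist_real_def\<close>)
    qed
    show "(G \<longlongrightarrow> G t) (at t within {0..})" by (rule Lim_transform_within_set[OF lim ev])
  qed
  have pl: "piecewise_linear_nonneg G"
    unfolding piecewise_linear_nonneg_def
  proof (intro allI impI)
    fix T :: real assume T: "0 < T"
    define P0 where "P0 = {0, T} \<union> arr ` {j. 1 \<le> j \<and> arr j \<le> T}"
    define BP where "BP a = (\<lambda>k. a + Wk k a / mu k) ` {1..s} \<union> {a + Ws a / M}" for a
    define P where "P = P0 \<union> ((\<Union>a\<in>P0. BP a) \<inter> {0..T})"
    have finP0: "finite P0" unfolding P0_def using fin by simp
    have P0sub: "P0 \<subseteq> {0..T}" unfolding P0_def using T arrpos by auto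
    have finP: "finite P" unfolding P_def BP_def using finP0 by auto
    have Psub: "P \<subseteq> {0..T}" unfolding P_def using P0sub by auto
    have "finite P \<and> 0 \<in> P \<and> T \<in> P \<and> P \<subseteq> {0..T} \<and>
        (\<forall>a\<in>P. \<forall>b\<in>P. a < b \<and> {a<..<b} \<inter> P = {} \<longrightarrow>
            (\<exists>\<alpha> \<beta>. \<forall>x\<in>{a..b}. G x = \<alpha> * x + \<beta>))"
    proof (intro conjI finP Psub ballI impI)
      show "0 \<in> P" "T \<in> P" unfolding P_def P0_def by auto
    next
      fix a' b' assume ab: "a' \<in> P" "b' \<in> P" "a' < b' \<and> {a'<..<b'} \<inter> P = {}"
      have a'0: "0 \<le> a'" and b'T: "b' \<le> T" using ab Psub by auto
      define a where "a = Max {x\<in>P0. x \<le> a'}"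
      have finA: "finite {x\<in>P0. x \<le> a'}" using finP0 by simp
      have ne: "0 \<in> {x\<in>P0. x \<le> a'}" unfolding P0_def using a'0 by auto
      have aP0: "a \<in> P0" and aa': "a \<le> a'" unfolding a_def
        using Max_in[OF finA] ne by auto
      have a0: "0 \<le> a" unfolding a_def using finA ne by (intro Max_ge) auto
      have amax: "x \<le> a" if "x \<in> P0" "x \<le> a'" for x unfolding a_def using finA that by (intro Max_ge) auto
      have GF: "G x = F a x" if x: "x \<in> {a'..b'}" for x
      proof (rule Gf)
        show "0 \<le> a" "a \<le> x" using a0 aa' x by auto
      next
        fix j assume j: "1 \<le> j" "a < arr j" "arr j < x"
        then have "arr j \<in> P0" unfolding P0_def using x b'T by auto
        then have "arr j \<in> P" unfolding P_def by auto
        show False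
        proof (cases "arr j \<le> a'")
          case True then show False using amax[OF \<open>arr j \<in> P0\<close>] j by simp
        next
          case False
          then have "arr j \<in> {a'<..<b'}" using j x by auto
          then show False using ab \<open>arr j \<in> P\<close> by blast
        qed
      qed
      have notin: "\<not> (a' < y \<and> y < b')" if "y \<in> BP a" for y
      proof
        assume y: "a' < y \<and> y < b'"
        then have "y \<in> P" unfolding P_def using that aP0 a'0 b'T by auto
        then show False using ab y by auto
      qed
      have "\<forall>k\<in>{1..s}. \<exists>\<alpha> \<beta>. \<forall>x\<in>{a'..b'}. max (Wk k a - mu k * (x - a)) 0 = \<alpha> * x + \<beta>"
      proof
        fix k assume k: "k \<in> {1..s}"
        show "\<exists>\<alpha> \<beta>. \<forall>x\<in>{a'..b'}. max (Wk k a - mu k * (x - a)) 0 = \<alpha> * x + \<beta>"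
          by (rule affine_max) (use mupos k notin[of "a + Wk k a / mu k"] in \<open>auto simp: BP_def\<close>)
      qed
      from affine_sum[OF _ this] obtain \<alpha>1 \<beta>1 where
        1: "\<forall>x\<in>{a'..b'}. (\<Sum>k=1..s. max (Wk k a - mu k * (x - a)) 0) = \<alpha>1 * x + \<beta>1" by auto
      obtain \<alpha>2 \<beta>2 where 2: "\<forall>x\<in>{a'..b'}. max (Ws a - M * (x - a)) 0 = \<alpha>2 * x + \<beta>2"
        using affine_max[OF Mpos, of a' a "Ws a" b'] notin[of "a + Ws a / M"] by (auto simp: BP_def)
      have "\<forall>x\<in>{a'..b'}. G x = (\<alpha>1 - \<alpha>2) * x + (\<beta>1 - \<beta>2)"
        using 1 2 GF by (simp add: F_def algebra_simps)
      then show "\<exists>\<alpha> \<beta>. \<forall>x\<in>{a'..b'}. G x = \<alpha> * x + \<beta>" by blast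
    qed
    then show "\<exists>P. finite P \<and> 0 \<in> P \<and> T \<in> P \<and> P \<subseteq> {0..T} \<and>
        (\<forall>a\<in>P. \<forall>b\<in>P. a < b \<and> {a<..<b} \<inter> P = {} \<longrightarrow>
            (\<exists>\<alpha> \<beta>. \<forall>x\<in>{a..b}. G x = \<alpha> * x + \<beta>))" by blast
  qed
  show ?thesis using cont pl nonneg by blast
qed

theorem proposition3:
  fixes s :: nat and mu :: "nat \<Rightarrow> real" and lam :: real and n :: nat
    and z :: "nat \<Rightarrow> real" and gamma :: "nat \<Rightarrow> nat \<Rightarrow> real"
    and xi :: "nat \<Rightarrow> nat" and v :: "nat \<Rightarrow> real"
    and a arr :: "nat \<Rightarrow> real" and Gamma :: "real \<Rightarrow> real"
  assumes "s \<ge> 2"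
    and "\<forall>k\<in>{1..s}. 0 < mu k"
    and "\<forall>k\<in>{1..<s}. mu k \<le> mu (Suc k)"
    and "lam > 0"
    and "\<forall>i. 0 \<le> z i"
    and "filterlim (\<lambda>j. \<Sum>i=1..j. z i) at_top sequentially"
    and "\<forall>j\<ge>1. \<forall>k\<in>{1..s}. 0 \<le> gamma j k"
    and "finite ((\<lambda>j. restrict (gamma j) {1..s}) ` {1..})"
    and "\<forall>j\<ge>1. xi j \<in> {1..s}"
    and "\<forall>j\<ge>1. 0 \<le> v j"
  defines "a \<equiv> (\<lambda>j. (\<Sum>i=1..j. z i) / lam)"
    and "arr \<equiv> (\<lambda>j. a j + sqrt (real n) * gamma j (xi j))"
    and "Gamma \<equiv> (\<lambda>t. (\<Sum>k=1..s. queue_workload arr v (\<lambda>j. xi j = k) (mu k) t)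
                      - queue_workload arr v (\<lambda>j. True) (\<Sum>k=1..s. mu k) t)"
  shows "continuous_on {0..} Gamma \<and> piecewise_linear_nonneg Gamma \<and> (\<forall>t\<ge>0. 0 \<le> Gamma t)"
proof -
  have lam: "0 < lam" using assms(4) .
  have apos: "0 \<le> a j" for j unfolding assms(11) using assms(5) lam by (simp add: sum_nonneg)
  have arrge: "a j \<le> arr j" if "1 \<le> j" for j
  proof -
    have "0 \<le> gamma j (xi j)" using assms(7,9) that by auto
    then show ?thesis unfolding assms(12) by simp
  qed
  have arrpos: "\<And>j. 1 \<le> j \<Longrightarrow> 0 \<le> arr j" using apos arrge by (meson order_trans)
  have fin: "finite {j. 1 \<le> j \<and> arr j \<le> t}" for t
  proof -
    have "eventually (\<lambda>j. lam * t + 1 \<le> (\<Sum>i=1..j. z i)) sequentially"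
      using assms(6) by (simp add: filterlim_at_top)
    then obtain N where N: "\<And>j. j \<ge> N \<Longrightarrow> lam * t + 1 \<le> (\<Sum>i=1..j. z i)"
      by (auto simp: eventually_sequentially)
    have "{j. 1 \<le> j \<and> arr j \<le> t} \<subseteq> {..<N}"
    proof
      fix j assume j: "j \<in> {j. 1 \<le> j \<and> arr j \<le> t}"
      show "j \<in> {..<N}"
      proof (rule ccontr)
        assume "j \<notin> {..<N}"
        then have "lam * t + 1 \<le> (\<Sum>i=1..j. z i)" using N by simp
        then have "t < a j" unfolding assms(11) using lam by (simp add: field_simps)
        then show False using j arrge[of j] by simp
      qed
    qed
    then show ?thesis by (rule finite_subset) simp
  qed
  have s1: "s \<ge> 1" using assms(1) by simp
  show ?thesis unfolding assms(13)
    by (rule main[OF s1 assms(2) fin arrpos assms(9) assms(10)])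
qed

end
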